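(* A random finite rooted ordered Family Tree $[\mathbf{T},\mathbf{o}]$ has the distribution $TGWT(\pi)$ for some distribution $\pi$ on $\{0,1,2,\dots\}$ with mean $m(\pi)<1$ if and only if (1) $[\mathbf{T},\mathbf{o}]$ is unimodular, and (2) the number of children $d_1(\mathbf{o})$ of the root is independent of the non-descendant tree of the root.
   Context: A Family Tree is a locally finite directed tree in which every vertex has out-degree at most one (edges from child to parent); ordered means children of each vertex are totally ordered. The non-descendant tree of $\mathbf{o}$ is the subtree induced by $(V(\mathbf{T})\setminus D(\mathbf{o}))\cup\{\mathbf{o}\}$, where $D(\mathbf{o})$ is $\mathbf{o}$ together with all vertices having a directed path to $\mathbf{o}$. Unimodular: $\mathbb{E}[\sum_{u}h([\mathbf{T},\mathbf{o},u])]=\mathbb{E}[\sum_u h([\mathbf{T},u,\mathbf{o}])]$ for every measurable $h\ge0$ on doubly rooted isomorphism classes. $TGWT(\pi)$: with $\hat\pi(k)=k\pi(k)/m(\pi)$, the random rooted ordered Family Tree in which (i) the root has a parent with probability $m(\pi)$, and independently each ancestor in turn has a parent with probability $m(\pi)$; (ii) each ancestor of the root independently receives $Z-1$ additional children with $Z\sim\hat\pi$, and the children of each ancestor are ordered uniformly at random; (iii) independent ordered Galton-Watson trees with offspring distribution $\pi$ are attached as descendant trees to the root and to each additional child. *)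

theory Defs
  imports "HOL-Probability.Probability"
begin

text \<open>A finite ordered Family Tree has a unique parentless vertex (the top);
  up to order-preserving isomorphism it is a plane tree.  Order-preserving
  isomorphisms of plane trees are unique, so an isomorphism class of a rooted
  (resp. doubly rooted) finite ordered Family Tree is canonically a plane tree
  together with the address (path of child indices from the top) of the root
  (resp. of both roots).\<close>

datatype ptree = Node "ptree list"

fun children :: "ptree \<Rightarrow> ptree list" where
  "children (Node ts) = ts"

fun valid_addr :: "ptree \<Rightarrow> nat list \<Rightarrow> bool" where
  "valid_addr t [] = True"
| "valid_addr (Node ts) (i # a) = (i < length ts \<and> valid_addr (ts ! i) a)"

definition addrs :: "ptree \<Rightarrow> nat list set" where
  "addrs t = {a. valid_addr t a}"

fun subtree :: "ptree \<Rightarrow> nat list \<Rightarrow> ptree" where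
  "subtree t [] = t"
| "subtree (Node ts) (i # a) = subtree (ts ! i) a"

fun graft :: "ptree \<Rightarrow> nat list \<Rightarrow> ptree \<Rightarrow> ptree" where
  "graft t [] s = s"
| "graft (Node ts) (i # a) s = Node (ts[i := graft (ts ! i) a s])"

type_synonym rtree = "ptree \<times> nat list"

definition valid_rtree :: "rtree \<Rightarrow> bool" where
  "valid_rtree x = valid_addr (fst x) (snd x)"

definition root_degree :: "rtree \<Rightarrow> nat" where
  "root_degree x = length (children (subtree (fst x) (snd x)))"

definition nondesc_tree :: "rtree \<Rightarrow> rtree" where
  "nondesc_tree x = (graft (fst x) (snd x) (Node []), snd x)"

definition indep_rv :: "'a pmf \<Rightarrow> ('a \<Rightarrow> 'b) \<Rightarrow> ('a \<Rightarrow> 'c) \<Rightarrow> bool" where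
  "indep_rv P f g \<longleftrightarrow>
     (\<forall>A B. measure_pmf.prob P {x. f x \<in> A \<and> g x \<in> B}
            = measure_pmf.prob P {x. f x \<in> A} * measure_pmf.prob P {x. g x \<in> B})"

definition unimodular :: "rtree pmf \<Rightarrow> bool" where
  "unimodular P \<longleftrightarrow>
     (\<forall>h :: ptree \<Rightarrow> nat list \<Rightarrow> nat list \<Rightarrow> ennreal.
        (\<integral>\<^sup>+x. (\<Sum>u\<in>addrs (fst x). h (fst x) (snd x) u) \<partial>measure_pmf P)
      = (\<integral>\<^sup>+x. (\<Sum>u\<in>addrs (fst x). h (fst x) u (snd x)) \<partial>measure_pmf P))"

definition mean_enn :: "nat pmf \<Rightarrow> ennreal" where
  "mean_enn \<pi> = (\<integral>\<^sup>+k. ennreal (real k) \<partial>measure_pmf \<pi>)"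

definition mean :: "nat pmf \<Rightarrow> real" where
  "mean \<pi> = enn2real (mean_enn \<pi>)"

text \<open>size-biased distribution \<open>\<pi>\<close>-hat (meaningful when mean > 0)\<close>
definition size_biased :: "nat pmf \<Rightarrow> nat pmf" where
  "size_biased \<pi> = embed_pmf (\<lambda>k. real k * pmf \<pi> k / mean \<pi>)"

partial_function (spmf) gw_forest :: "nat pmf \<Rightarrow> nat \<Rightarrow> ptree list spmf" where
  "gw_forest \<pi> k =
     (if k = 0 then return_spmf []
      else bind_spmf (spmf_of_pmf \<pi>) (\<lambda>j.
             bind_spmf (gw_forest \<pi> j) (\<lambda>cs.
             bind_spmf (gw_forest \<pi> (k - 1)) (\<lambda>rest.
             return_spmf (Node cs # rest)))))"

definition gw :: "nat pmf \<Rightarrow> ptree spmf" where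
  "gw \<pi> = map_spmf hd (gw_forest \<pi> 1)"

definition add_parent :: "nat pmf \<Rightarrow> rtree \<Rightarrow> rtree spmf" where
  "add_parent \<pi> x =
     bind_spmf (spmf_of_pmf (size_biased \<pi>)) (\<lambda>z.
     bind_spmf (spmf_of_pmf (pmf_of_set {..<z})) (\<lambda>i.
     bind_spmf (gw_forest \<pi> i) (\<lambda>before.
     bind_spmf (gw_forest \<pi> (z - 1 - i)) (\<lambda>after.
     return_spmf (Node (before @ [fst x] @ after), i # snd x)))))"

partial_function (spmf) ancestral_line :: "nat pmf \<Rightarrow> rtree \<Rightarrow> rtree spmf" where
  "ancestral_line \<pi> x =
     bind_spmf (spmf_of_pmf (bernoulli_pmf (mean \<pi>))) (\<lambda>b.
       if b then bind_spmf (add_parent \<pi> x) (\<lambda>y. ancestral_line \<pi> y)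
       else return_spmf x)"

definition TGWT :: "nat pmf \<Rightarrow> rtree spmf" where
  "TGWT \<pi> = bind_spmf (gw \<pi>) (\<lambda>t. ancestral_line \<pi> (t, []))"

end

theory Submission
  imports Defs
begin

fun W :: "nat pmf \<Rightarrow> ptree \<Rightarrow> real" where
  "W \<pi> (Node ts) = pmf \<pi> (length ts) * prod_list (map (W \<pi>) ts)"

fun Wout :: "nat pmf \<Rightarrow> ptree \<Rightarrow> nat list \<Rightarrow> real" where
  "Wout \<pi> t [] = 1"
| "Wout \<pi> (Node ts) (i # a) = (if i < length ts then
     pmf \<pi> (length ts) * prod_list (map (W \<pi>) (take i ts)) * prod_list (map (W \<pi>) (drop (Suc i) ts))
       * Wout \<pi> (ts ! i) a else 0)"

lemma W_nonneg: "0 \<le> W \<pi> t"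
  by (induction t) (auto intro!: prod_list_nonneg mult_nonneg_nonneg)

lemma Wout_nonneg: "0 \<le> Wout \<pi> t a"
  by (induction \<pi> t a rule: Wout.induct) (auto intro!: prod_list_nonneg mult_nonneg_nonneg W_nonneg)

lemma valid_addr_append: "valid_addr t (a @ b) = (valid_addr t a \<and> valid_addr (subtree t a) b)"
  by (induction t a rule: valid_addr.induct) auto

lemma subtree_append: "subtree t (a @ b) = subtree (subtree t a) b"
  by (induction t a rule: subtree.induct) auto

lemma valid_addr_snoc: "valid_addr t (a @ [i]) = (valid_addr t a \<and> i < length (children (subtree t a)))"
  by (simp add: valid_addr_append) (cases "subtree t a", auto)

lemma graft_subtree: "valid_addr t a \<Longrightarrow> graft t a (subtree t a) = t"
  by (induction t a rule: valid_addr.induct) auto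

lemma subtree_graft: "valid_addr t a \<Longrightarrow> subtree (graft t a s) a = s"
  by (induction t a arbitrary: s rule: valid_addr.induct) auto

lemma valid_graft_append: "valid_addr t a \<Longrightarrow> valid_addr (graft t a s) (a @ b) = valid_addr s b"
  by (induction t a arbitrary: s rule: valid_addr.induct) auto

lemma valid_graft: "valid_addr t a \<Longrightarrow> valid_addr (graft t a s) a"
  using valid_graft_append[of t a s "[]"] by simp

lemma graft_graft_append: "valid_addr t a \<Longrightarrow> graft (graft t a s) (a @ b) s' = graft t a (graft s b s')"
  by (induction t a arbitrary: s rule: valid_addr.induct) auto

lemma graft_graft: "valid_addr t a \<Longrightarrow> graft (graft t a s) a s' = graft t a s'"
  using graft_graft_append[of t a s "[]"] by simp

lemma prod_list_split_at:
  fixes f :: "'a \<Rightarrow> real"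
  assumes "i < length ts"
  shows "prod_list (map f ts) = prod_list (map f (take i ts)) * f (ts ! i) * prod_list (map f (drop (Suc i) ts))"
proof -
  have "prod_list (map f ts) = prod_list (map f (take i ts @ ts ! i # drop (Suc i) ts))"
    using assms by (simp add: id_take_nth_drop[symmetric])
  then show ?thesis by simp
qed

lemma W_split: "valid_addr t a \<Longrightarrow> W \<pi> t = Wout \<pi> t a * W \<pi> (subtree t a)"
proof (induction t a rule: valid_addr.induct)
  case (2 ts i a)
  then show ?case
    by (simp add: prod_list_split_at[of i ts "W \<pi>"])
qed simp

lemma Wout_graft: "valid_addr t a \<Longrightarrow> Wout \<pi> (graft t a s) a = Wout \<pi> t a"
  by (induction t a rule: valid_addr.induct) auto

lemma Wout_append: "valid_addr t p \<Longrightarrow> Wout \<pi> t (p @ b) = Wout \<pi> t p * Wout \<pi> (subtree t p) b"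
  by (induction t p rule: valid_addr.induct) auto

lemma addrs_Node: "addrs (Node ts) = insert [] (\<Union>i<length ts. (#) i ` addrs (ts ! i))"
  unfolding addrs_def by (auto simp: neq_Nil_conv) (case_tac x, auto)

lemma finite_addrs: "finite (addrs t)"
proof (induction t)
  case (Node ts)
  then show ?case by (auto simp: addrs_Node)
qed

lemma Nil_in_addrs: "[] \<in> addrs t" by (simp add: addrs_def)

lemma sum_degree: "(\<Sum>a\<in>addrs t. length (children (subtree t a))) = card (addrs t) - 1"
proof -
  let ?S = "SIGMA a:addrs t. {..<length (children (subtree t a))}"
  have "(\<Sum>a\<in>addrs t. length (children (subtree t a))) = card ?S"
    by (subst card_SigmaI) (auto simp: finite_addrs)
  also have "card ?S = card (addrs t - {[]})"
  proof (rule bij_betw_same_card[where f = "\<lambda>(a, i). a @ [i]"])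
    show "bij_betw (\<lambda>(a, i). a @ [i]) ?S (addrs t - {[]})"
    proof (rule bij_betw_byWitness[where f' = "\<lambda>b. (butlast b, last b)"])
      show "\<forall>a\<in>?S. (\<lambda>b. (butlast b, last b)) ((\<lambda>(a, i). a @ [i]) a) = a" by auto
      show "\<forall>a'\<in>addrs t - {[]}. (\<lambda>(a, i). a @ [i]) (butlast a', last a') = a'" by auto
      show "(\<lambda>(a, i). a @ [i]) ` ?S \<subseteq> addrs t - {[]}"
        by (auto simp: addrs_def valid_addr_snoc)
      show "(\<lambda>b. (butlast b, last b)) ` (addrs t - {[]}) \<subseteq> ?S"
      proof
        fix p assume "p \<in> (\<lambda>b. (butlast b, last b)) ` (addrs t - {[]})"
        then obtain b where b: "b \<in> addrs t" "b \<noteq> []" "p = (butlast b, last b)" by auto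
        then have "valid_addr t (butlast b @ [last b])" by (simp add: addrs_def)
        then show "p \<in> ?S" using b by (simp only: valid_addr_snoc) (auto simp: addrs_def)
      qed
    qed
  qed
  also have "\<dots> = card (addrs t) - 1" by (simp add: finite_addrs Nil_in_addrs)
  finally show ?thesis .
qed


declare bind_spmf_of_pmf[simp del]

lemma spmf_bind_single:
  assumes "\<And>x. x \<in> set_spmf p \<Longrightarrow> x \<noteq> c \<Longrightarrow> spmf (f x) y = 0"
  shows "spmf (bind_spmf p f) y = spmf p c * spmf (f c) y"
proof -
  have "ennreal (spmf (bind_spmf p f) y) = (\<integral>\<^sup>+x. ennreal (spmf (f x) y) \<partial>measure_spmf p)"
    by (rule ennreal_spmf_bind)
  also have "\<dots> = (\<integral>\<^sup>+x. ennreal (spmf (f c) y) * indicator {c} x \<partial>measure_spmf p)"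
    by (rule nn_integral_cong_AE) (auto simp: AE_measure_spmf_iff assms split: split_indicator)
  also have "\<dots> = ennreal (spmf (f c) y) * spmf p c"
    by (simp add: nn_integral_cmult_indicator emeasure_spmf_single)
  finally show ?thesis
    by (simp add: ennreal_mult'[symmetric] mult.commute)
qed

lemma spmf_bind_zero:
  assumes "\<And>x. x \<in> set_spmf p \<Longrightarrow> spmf (f x) y = 0"
  shows "spmf (bind_spmf p f) y = 0"
  using assms by (auto simp: spmf_eq_0_set_spmf set_bind_spmf)

lemma gwf_formula:
  "spmf (gw_forest \<pi> k) ts = (if length ts = k then prod_list (map (W \<pi>) ts) else 0)"
proof (induction ts arbitrary: k rule: measure_induct_rule[of "size_list size"])
  case (less ts)
  show ?case
  proof (cases "k = 0")
    case True
    then show ?thesis by (subst gw_forest.simps) auto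
  next
    case False
    show ?thesis
    proof (cases ts)
      case Nil
      then show ?thesis using False
        by (subst gw_forest.simps) (auto intro!: spmf_bind_zero)
    next
      case (Cons t rest)
      obtain cs where t: "t = Node cs" by (cases t)
      have IH1: "spmf (gw_forest \<pi> j) cs = (if length cs = j then prod_list (map (W \<pi>) cs) else 0)" for j
        by (rule less) (simp add: Cons t)
      have IH2: "spmf (gw_forest \<pi> (k - 1)) rest = (if length rest = k - 1 then prod_list (map (W \<pi>) rest) else 0)"
        by (rule less) (simp add: Cons t)
      have inner: "spmf (bind_spmf (gw_forest \<pi> j) (\<lambda>cs'. bind_spmf (gw_forest \<pi> (k - 1))
               (\<lambda>rest'. return_spmf (Node cs' # rest')))) (Node cs # rest)
           = spmf (gw_forest \<pi> j) cs * spmf (gw_forest \<pi> (k - 1)) rest" for j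
        apply (subst spmf_bind_single[where c = cs])
         apply (rule spmf_bind_zero) apply simp
        apply (subst spmf_bind_single[where c = rest])
         apply simp
        apply simp
        done
      have "spmf (gw_forest \<pi> k) (Node cs # rest) = 
         spmf (bind_spmf (spmf_of_pmf \<pi>) (\<lambda>j. bind_spmf (gw_forest \<pi> j) (\<lambda>cs'. bind_spmf (gw_forest \<pi> (k - 1))
               (\<lambda>rest'. return_spmf (Node cs' # rest'))))) (Node cs # rest)"
        using False by (subst gw_forest.simps) simp
      also have "\<dots> = pmf \<pi> (length cs) * (spmf (gw_forest \<pi> (length cs)) cs * spmf (gw_forest \<pi> (k - 1)) rest)"
        apply (subst spmf_bind_single[where c = "length cs"])
         apply (simp only: inner IH1) apply simp
        apply (simp only: inner spmf_spmf_of_pmf)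
        done
      also have "\<dots> = (if length ts = k then prod_list (map (W \<pi>) ts) else 0)"
        using False by (simp only: IH2) (auto simp add: IH1 Cons t)
      finally show ?thesis by (simp add: Cons t)
    qed
  qed
qed

lemma set_gwf: "ts \<in> set_spmf (gw_forest \<pi> k) \<Longrightarrow> length ts = k"
  by (auto simp: in_set_spmf_iff_spmf gwf_formula split: if_splits)

lemma gw_formula: "spmf (gw \<pi>) t = W \<pi> t"
proof -
  have "spmf (gw \<pi>) t = spmf (map_spmf hd (gw_forest \<pi> 1)) (hd [t])" by (simp add: gw_def)
  also have "\<dots> = spmf (gw_forest \<pi> 1) [t]"
  proof (cases "[t] \<in> set_spmf (gw_forest \<pi> 1)")
    case True
    show ?thesis
      by (rule spmf_map_inj[OF _ True]) (auto simp: inj_on_def dest!: set_gwf simp: length_Suc_conv)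
  next
    case False
    then have "spmf (gw_forest \<pi> 1) [t] = 0" by (simp add: spmf_eq_0_set_spmf)
    moreover have "t \<notin> set_spmf (map_spmf hd (gw_forest \<pi> 1))"
    proof
      assume "t \<in> set_spmf (map_spmf hd (gw_forest \<pi> 1))"
      then obtain xs where xs: "xs \<in> set_spmf (gw_forest \<pi> 1)" "t = hd xs" by auto
      from xs(1) have "length xs = 1" by (rule set_gwf)
      then have "xs = [t]" using xs(2) by (cases xs) auto
      with xs(1) False show False by simp
    qed
    ultimately show ?thesis by (metis spmf_eq_0_set_spmf list.sel(1))
  qed
  also have "\<dots> = W \<pi> t" by (simp add: gwf_formula)
  finally show ?thesis .
qed


lemma mean_enn_alt: "mean_enn \<pi> = (\<integral>\<^sup>+k. ennreal (pmf \<pi> k * real k) \<partial>count_space UNIV)"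
  unfolding mean_enn_def nn_integral_measure_pmf by (simp add: ennreal_mult')

lemma mean_facts:
  assumes "mean_enn \<pi> < 1"
  shows "mean_enn \<pi> = ennreal (mean \<pi>)" "0 \<le> mean \<pi>" "mean \<pi> < 1"
proof -
  have "mean_enn \<pi> < top" using assms by (simp add: order_less_trans)
  then show 1: "mean_enn \<pi> = ennreal (mean \<pi>)" by (simp add: mean_def)
  show "0 \<le> mean \<pi>" by (simp add: mean_def)
  have "ennreal (mean \<pi>) < 1" using assms 1 by metis
  then show "mean \<pi> < 1" by (metis ennreal_less_one_iff)
qed

lemma point_le_mean: "ennreal (real k * pmf \<pi> k) \<le> mean_enn \<pi>"
proof -
  have "ennreal (real k * pmf \<pi> k) = (\<integral>\<^sup>+x. ennreal (real k) * indicator {k} x \<partial>measure_pmf \<pi>)"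
    by (simp add: nn_integral_cmult_indicator emeasure_pmf_single ennreal_mult')
  also have "\<dots> \<le> mean_enn \<pi>"
    unfolding mean_enn_def by (rule nn_integral_mono) (auto split: split_indicator)
  finally show ?thesis .
qed

lemma mean_zero_pmf:
  assumes "mean_enn \<pi> < 1" "mean \<pi> = 0" "0 < k"
  shows "pmf \<pi> k = 0"
proof -
  have "ennreal (real k * pmf \<pi> k) \<le> 0"
    using point_le_mean[of k \<pi>] mean_facts(1)[OF assms(1)] assms(2) by simp
  then have "real k * pmf \<pi> k = 0" by (simp add: pmf_nonneg)
  then show ?thesis using assms(3) by simp
qed

lemma pmf_size_biased:
  assumes "mean_enn \<pi> < 1" "0 < mean \<pi>"
  shows "pmf (size_biased \<pi>) k = real k * pmf \<pi> k / mean \<pi>"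
proof -
  let ?m = "mean \<pi>"
  have nn: "\<And>k. 0 \<le> real k * pmf \<pi> k / ?m" using assms by (simp add: pmf_nonneg)
  have "(\<integral>\<^sup>+k. ennreal (real k * pmf \<pi> k / ?m) \<partial>count_space UNIV)
      = (\<integral>\<^sup>+k. ennreal (1 / ?m) * ennreal (pmf \<pi> k * real k) \<partial>count_space UNIV)"
    using assms by (intro nn_integral_cong) (simp add: ennreal_mult'[symmetric] field_simps)
  also have "\<dots> = ennreal (1 / ?m) * mean_enn \<pi>"
    by (simp add: nn_integral_cmult mean_enn_alt)
  also have "\<dots> = 1" using assms mean_facts(1)[OF assms(1)]
    by (simp add: ennreal_mult'[symmetric])
  finally have "(\<integral>\<^sup>+k. ennreal (real k * pmf \<pi> k / ?m) \<partial>count_space UNIV) = 1" .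
  then show ?thesis unfolding size_biased_def using nn by (subst pmf_embed_pmf) auto
qed

lemma set_size_biased:
  assumes "mean_enn \<pi> < 1" "0 < mean \<pi>" "z \<in> set_pmf (size_biased \<pi>)"
  shows "0 < z"
  using assms by (auto simp: set_pmf_iff pmf_size_biased)


lemma ap_formula:
  assumes "0 < mean \<pi>" "mean_enn \<pi> < 1" "i < length cs" "cs ! i = t0"
  shows "spmf (add_parent \<pi> (t0, a0)) (Node cs, i # a0) = pmf \<pi> (length cs) / mean \<pi>
     * prod_list (map (W \<pi>) (take i cs)) * prod_list (map (W \<pi>) (drop (Suc i) cs))"
proof -
  let ?L = "length cs"
  let ?y = "(Node cs, i # a0)"
  have L: "0 < ?L" using assms(3) by linarith
  have csi: "take i cs @ t0 # drop (Suc i) cs = cs"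
    using assms by (metis id_take_nth_drop)
  have H1: "\<And>b af. b @ t0 # af = cs \<Longrightarrow> length b = i \<Longrightarrow> b = take i cs \<and> af = drop (Suc i) cs"
    by auto
  have step4: "spmf (bind_spmf (gw_forest \<pi> (?L - 1 - i)) (\<lambda>after. return_spmf (Node (take i cs @ [t0] @ after), i # a0))) ?y
     = prod_list (map (W \<pi>) (drop (Suc i) cs))"
  proof -
    have "spmf (bind_spmf (gw_forest \<pi> (?L - 1 - i)) (\<lambda>after. return_spmf (Node (take i cs @ [t0] @ after), i # a0))) ?y
      = spmf (gw_forest \<pi> (?L - 1 - i)) (drop (Suc i) cs) * spmf (return_spmf (Node (take i cs @ [t0] @ drop (Suc i) cs), i # a0)) ?y"
    proof (rule spmf_bind_single)
      fix af assume "af \<noteq> drop (Suc i) cs"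
      then have "take i cs @ t0 # af \<noteq> cs" using H1[of "take i cs" af] assms(3) by auto
      then show "spmf (return_spmf (Node (take i cs @ [t0] @ af), i # a0)) ?y = 0" by simp
    qed
    also have "\<dots> = prod_list (map (W \<pi>) (drop (Suc i) cs))"
      using assms(3) by (simp add: csi gwf_formula)
    finally show ?thesis .
  qed
  have step3: "spmf (bind_spmf (gw_forest \<pi> i) (\<lambda>before. bind_spmf (gw_forest \<pi> (?L - 1 - i)) (\<lambda>after. return_spmf (Node (before @ [t0] @ after), i # a0)))) ?y
     = prod_list (map (W \<pi>) (take i cs)) * prod_list (map (W \<pi>) (drop (Suc i) cs))"
  proof -
    have "spmf (bind_spmf (gw_forest \<pi> i) (\<lambda>before. bind_spmf (gw_forest \<pi> (?L - 1 - i)) (\<lambda>after. return_spmf (Node (before @ [t0] @ after), i # a0)))) ?y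
      = spmf (gw_forest \<pi> i) (take i cs) * spmf (bind_spmf (gw_forest \<pi> (?L - 1 - i)) (\<lambda>after. return_spmf (Node (take i cs @ [t0] @ after), i # a0))) ?y"
    proof (rule spmf_bind_single)
      fix b assume b: "b \<in> set_spmf (gw_forest \<pi> i)" "b \<noteq> take i cs"
      have "length b = i" using b(1) by (rule set_gwf)
      then have "\<And>af. b @ t0 # af \<noteq> cs" using H1 b(2) by blast
      then show "spmf (bind_spmf (gw_forest \<pi> (?L - 1 - i)) (\<lambda>after. return_spmf (Node (b @ [t0] @ after), i # a0))) ?y = 0"
        by (intro spmf_bind_zero) simp
    qed
    also have "\<dots> = prod_list (map (W \<pi>) (take i cs)) * prod_list (map (W \<pi>) (drop (Suc i) cs))"
      using assms(3) by (simp only: step4 gwf_formula) simp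
    finally show ?thesis .
  qed
  have pmfL: "pmf (pmf_of_set {..<?L}) i = 1 / ?L"
    using L assms(3) by (subst pmf_of_set) auto
  have step2: "spmf (bind_spmf (spmf_of_pmf (pmf_of_set {..<?L})) (\<lambda>i'. bind_spmf (gw_forest \<pi> i') (\<lambda>before. bind_spmf (gw_forest \<pi> (?L - 1 - i')) (\<lambda>after. return_spmf (Node (before @ [t0] @ after), i' # a0))))) ?y
     = 1 / ?L * (prod_list (map (W \<pi>) (take i cs)) * prod_list (map (W \<pi>) (drop (Suc i) cs)))"
  proof -
    have "spmf (bind_spmf (spmf_of_pmf (pmf_of_set {..<?L})) (\<lambda>i'. bind_spmf (gw_forest \<pi> i') (\<lambda>before. bind_spmf (gw_forest \<pi> (?L - 1 - i')) (\<lambda>after. return_spmf (Node (before @ [t0] @ after), i' # a0))))) ?y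
      = spmf (spmf_of_pmf (pmf_of_set {..<?L})) i * spmf (bind_spmf (gw_forest \<pi> i) (\<lambda>before. bind_spmf (gw_forest \<pi> (?L - 1 - i)) (\<lambda>after. return_spmf (Node (before @ [t0] @ after), i # a0)))) ?y"
    proof (rule spmf_bind_single)
      fix i' assume "i' \<noteq> i"
      then show "spmf (bind_spmf (gw_forest \<pi> i') (\<lambda>before. bind_spmf (gw_forest \<pi> (?L - 1 - i')) (\<lambda>after. return_spmf (Node (before @ [t0] @ after), i' # a0)))) ?y = 0"
        by (intro spmf_bind_zero) simp
    qed
    also have "\<dots> = 1 / ?L * (prod_list (map (W \<pi>) (take i cs)) * prod_list (map (W \<pi>) (drop (Suc i) cs)))"
      using assms(3) L by (simp only: step3 spmf_spmf_of_pmf pmfL)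
    finally show ?thesis .
  qed
  have "spmf (add_parent \<pi> (t0, a0)) ?y = pmf (size_biased \<pi>) ?L * (1 / ?L * (prod_list (map (W \<pi>) (take i cs)) * prod_list (map (W \<pi>) (drop (Suc i) cs))))"
    unfolding add_parent_def fst_conv snd_conv
  proof (subst spmf_bind_single[where c = ?L])
    fix z assume z: "z \<in> set_spmf (spmf_of_pmf (size_biased \<pi>))" "z \<noteq> ?L"
    then have z0: "0 < z" using set_size_biased[OF assms(2,1)] by simp
    show "spmf (bind_spmf (spmf_of_pmf (pmf_of_set {..<z})) (\<lambda>i'. bind_spmf (gw_forest \<pi> i') (\<lambda>before. bind_spmf (gw_forest \<pi> (z - 1 - i')) (\<lambda>after. return_spmf (Node (before @ [t0] @ after), i' # a0))))) ?y = 0"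
    proof (intro spmf_bind_zero)
      fix i' b af assume "i' \<in> set_spmf (spmf_of_pmf (pmf_of_set {..<z}))" "b \<in> set_spmf (gw_forest \<pi> i')"
        "af \<in> set_spmf (gw_forest \<pi> (z - 1 - i'))"
      moreover have "set_pmf (pmf_of_set {..<z}) = {..<z}" using z0 by (intro set_pmf_of_set) auto
      ultimately have "i' < z" "length b = i'" "length af = z - 1 - i'" by (auto dest: set_gwf)
      then have "length (b @ [t0] @ af) = z" by simp
      then have "b @ [t0] @ af \<noteq> cs" using z(2) by auto
      then show "spmf (return_spmf (Node (b @ [t0] @ af), i' # a0)) ?y = 0" by simp
    qed
  next
    show "spmf (spmf_of_pmf (size_biased \<pi>)) ?L * spmf (bind_spmf (spmf_of_pmf (pmf_of_set {..<?L})) (\<lambda>i'. bind_spmf (gw_forest \<pi> i') (\<lambda>before. bind_spmf (gw_forest \<pi> (?L - 1 - i')) (\<lambda>after. return_spmf (Node (before @ [t0] @ after), i' # a0))))) ?y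
      = pmf (size_biased \<pi>) ?L * (1 / ?L * (prod_list (map (W \<pi>) (take i cs)) * prod_list (map (W \<pi>) (drop (Suc i) cs))))"
      by (simp only: step2 spmf_spmf_of_pmf)
  qed
  also have "\<dots> = pmf \<pi> (length cs) / mean \<pi>
     * prod_list (map (W \<pi>) (take i cs)) * prod_list (map (W \<pi>) (drop (Suc i) cs))"
    using assms L by (simp add: pmf_size_biased)
  finally show ?thesis .
qed


lemma set_add_parent: "y \<in> set_spmf (add_parent \<pi> x) \<Longrightarrow> snd y = hd (snd y) # snd x"
  by (auto simp: add_parent_def set_spmf_bind_pmf set_bind_spmf)

lemma al_len: "\<forall>x. \<forall>y\<in>set_spmf (ancestral_line \<pi> x). length (snd x) \<le> length (snd y)"
proof (induction rule: ancestral_line.fixp_induct)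
  case 1
  then show ?case by (simp add: ball_simps[symmetric] del: ball_simps) 
next
  case 2
  then show ?case by simp
next
  case (3 f)
  show ?case
  proof (intro allI ballI)
    fix x y assume y: "y \<in> set_spmf (bind_spmf (spmf_of_pmf (bernoulli_pmf (mean \<pi>)))
             (\<lambda>b. if b then add_parent \<pi> x \<bind> f \<pi> else return_spmf x))"
    then obtain b where yb: "y \<in> set_spmf (if b then add_parent \<pi> x \<bind> f \<pi> else return_spmf x)"
      by (auto simp: set_bind_spmf set_spmf_bind_pmf bind_spmf_of_pmf)
    then show "length (snd x) \<le> length (snd y)"
    proof (cases b)
      case True
      then obtain z where z: "z \<in> set_spmf (add_parent \<pi> x)" "y \<in> set_spmf (f \<pi> z)"
        using yb by (auto simp: set_bind_spmf set_spmf_bind_pmf bind_spmf_of_pmf)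
      have "length (snd z) \<le> length (snd y)" using 3 z(2) by (cases z) auto
      moreover have "snd z = hd (snd z) # snd x" using set_add_parent[OF z(1)] .
      then have "length (snd x) \<le> length (snd z)" by (metis impossible_Cons nle_le)
      ultimately show ?thesis by simp
    qed auto
  qed
qed


lemma spmf_bind_bernoulli:
  assumes "0 \<le> p" "p \<le> 1"
  shows "spmf (bind_spmf (spmf_of_pmf (bernoulli_pmf p)) f) y = p * spmf (f True) y + (1 - p) * spmf (f False) y"
  using assms by (simp add: spmf_bind)

lemma set_add_parent2:
  assumes "x' \<in> set_spmf (add_parent \<pi> x)"
  shows "\<exists>cs i. fst x' = Node cs \<and> snd x' = i # snd x \<and> i < length cs \<and> cs ! i = fst x"
proof -
  from assms obtain z i b af where "i \<in> set_pmf (pmf_of_set {..<z})" "b \<in> set_spmf (gw_forest \<pi> i)"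
    "x' = (Node (b @ [fst x] @ af), i # snd x)"
    by (auto simp: add_parent_def set_bind_spmf)
  then show ?thesis by (auto dest!: set_gwf intro!: exI[of _ "b @ [fst x] @ af"])
qed

definition ALf :: "nat pmf \<Rightarrow> rtree \<Rightarrow> rtree \<Rightarrow> real" where
  "ALf \<pi> x y = (if \<exists>p. snd y = p @ snd x \<and> valid_addr (fst y) p \<and> subtree (fst y) p = fst x
     then (1 - mean \<pi>) * Wout \<pi> (fst y) (take (length (snd y) - length (snd x)) (snd y)) else 0)"

lemma ALf_short: "length (snd y) < length (snd x) \<Longrightarrow> ALf \<pi> x y = 0"
  by (auto simp: ALf_def)

lemma al_formula_aux:
  assumes m: "mean_enn \<pi> < 1"
  shows "length (snd y) - length (snd x) = n \<Longrightarrow> length (snd x) \<le> length (snd y) \<Longrightarrow> spmf (ancestral_line \<pi> x) y = ALf \<pi> x y"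
proof (induction n arbitrary: x)
  case 0
  let ?m = "mean \<pi>"
  have m01: "0 \<le> ?m" "?m \<le> 1" using mean_facts[OF m] by auto
  have len: "length (snd y) = length (snd x)" using 0 by simp
  have t1: "spmf (bind_spmf (add_parent \<pi> x) (ancestral_line \<pi>)) y = 0"
  proof (rule spmf_bind_zero)
    fix x' assume "x' \<in> set_spmf (add_parent \<pi> x)"
    then have "length (snd x') > length (snd y)" using len by (auto dest!: set_add_parent2)
    then have "y \<notin> set_spmf (ancestral_line \<pi> x')" using al_len[of \<pi>] by (meson leD)
    then show "spmf (ancestral_line \<pi> x') y = 0" by (simp add: spmf_eq_0_set_spmf)
  qed
  have "spmf (ancestral_line \<pi> x) y = (1 - ?m) * spmf (return_spmf x) y"
    by (subst ancestral_line.simps) (simp add: spmf_bind_bernoulli m01 t1)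
  also have "\<dots> = ALf \<pi> x y"
  proof (cases "x = y")
    case True
    then show ?thesis by (auto simp: ALf_def intro!: exI[of _ "[]"])
  next
    case False
    have "\<not> (\<exists>p. snd y = p @ snd x \<and> valid_addr (fst y) p \<and> subtree (fst y) p = fst x)"
    proof
      assume "\<exists>p. snd y = p @ snd x \<and> valid_addr (fst y) p \<and> subtree (fst y) p = fst x"
      then obtain p where p: "snd y = p @ snd x" "subtree (fst y) p = fst x" by auto
      then have "p = []" using len by auto
      then have "x = y" using p by (cases x, cases y) auto
      with False show False by simp
    qed
    then have "ALf \<pi> x y = 0" unfolding ALf_def by (simp only: if_False)
    then show ?thesis using False by simp
  qed
  finally show ?case .
next
  case (Suc n)
  let ?m = "mean \<pi>"
  have m01: "0 \<le> ?m" "?m \<le> 1" using mean_facts[OF m] by auto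
  obtain t a where y: "y = (t, a)" by (cases y)
  obtain t0 a0 where x: "x = (t0, a0)" by (cases x)
  have len: "length a = Suc n + length a0" using Suc.prems by (simp add: x y)
  have IH: "\<And>x'. x' \<in> set_spmf (add_parent \<pi> x) \<Longrightarrow> spmf (ancestral_line \<pi> x') y = ALf \<pi> x' y"
  proof -
    fix x' assume "x' \<in> set_spmf (add_parent \<pi> x)"
    then have "length (snd x') = Suc (length (snd x))" by (auto dest!: set_add_parent2)
    then show "spmf (ancestral_line \<pi> x') y = ALf \<pi> x' y"
      using Suc.prems by (intro Suc.IH) auto
  qed
  have xy: "x \<noteq> y" using len x y by auto
  have main: "spmf (ancestral_line \<pi> x) y = ?m * spmf (bind_spmf (add_parent \<pi> x) (ancestral_line \<pi>)) y"
    using xy by (subst ancestral_line.simps) (simp add: spmf_bind_bernoulli m01)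
  show ?case
  proof (cases "\<exists>p. a = p @ a0 \<and> valid_addr t p \<and> subtree t p = t0")
    case False
    have "spmf (bind_spmf (add_parent \<pi> x) (ancestral_line \<pi>)) y = 0"
    proof (rule spmf_bind_zero)
      fix x' assume x': "x' \<in> set_spmf (add_parent \<pi> x)"
      then obtain cs i where ci: "fst x' = Node cs" "snd x' = i # a0" "i < length cs" "cs ! i = t0"
        using set_add_parent2[OF x'] x by auto
      have "ALf \<pi> x' y = 0"
      proof (rule ccontr)
        assume "ALf \<pi> x' y \<noteq> 0"
        then obtain p where p: "a = p @ i # a0" "valid_addr t p" "subtree t p = Node cs"
          using ci y by (auto simp: ALf_def split: if_splits)
        have "a = (p @ [i]) @ a0 \<and> valid_addr t (p @ [i]) \<and> subtree t (p @ [i]) = t0"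
          using p ci by (simp add: valid_addr_snoc subtree_append)
        with False show False by blast
      qed
      then show "spmf (ancestral_line \<pi> x') y = 0" using IH[OF x'] by simp
    qed
    moreover have "ALf \<pi> x y = 0" using False unfolding x y ALf_def fst_conv snd_conv by (simp only: if_False)
    ultimately show ?thesis using main by simp
  next
    case True
    then obtain p where p: "a = p @ a0" "valid_addr t p" "subtree t p = t0" by auto
    have "p \<noteq> []" using p len by auto
    then obtain p' i where p': "p = p' @ [i]" by (metis append_butlast_last_id)
    have vp': "valid_addr t p'" and ilt: "i < length (children (subtree t p'))"
      using p(2) by (simp_all add: p' valid_addr_snoc)
    obtain cs where cs: "subtree t p' = Node cs" by (cases "subtree t p'")
    have csi: "cs ! i = t0" using p(3) by (simp add: p' subtree_append cs)
    have ilt': "i < length cs" using ilt cs by simp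
    let ?x0 = "(Node cs, i # a0)"
    have takep: "take (length a - length a0) a = p" using p by simp
    have takep': "take (length a - length (i # a0)) a = p'" using p p' by simp
    have ALx0: "ALf \<pi> ?x0 y = (1 - ?m) * Wout \<pi> t p'"
      using p p' vp' cs y by (auto simp: ALf_def takep' intro!: exI[of _ p'])
    have single: "spmf (bind_spmf (add_parent \<pi> x) (ancestral_line \<pi>)) y = spmf (add_parent \<pi> x) ?x0 * ALf \<pi> ?x0 y"
    proof (subst spmf_bind_single[where c = ?x0])
      fix x' assume x': "x' \<in> set_spmf (add_parent \<pi> x)" "x' \<noteq> ?x0"
      then obtain cs' i' where ci: "fst x' = Node cs'" "snd x' = i' # a0" "i' < length cs'" "cs' ! i' = t0"
        using set_add_parent2[OF x'(1)] x by auto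
      have "ALf \<pi> x' y = 0"
      proof (rule ccontr)
        assume "ALf \<pi> x' y \<noteq> 0"
        then obtain q where q: "a = q @ i' # a0" "subtree t q = Node cs'"
          using ci y by (auto simp: ALf_def split: if_splits)
        have "q @ [i'] = p' @ [i]" using q(1) p(1) p' by simp
        then have "q = p'" "i' = i" by auto
        then have "x' = ?x0" using q ci cs by (cases x') auto
        with x'(2) show False by simp
      qed
      then show "spmf (ancestral_line \<pi> x') y = 0" using IH[OF x'(1)] by simp
    next
      have "x0 \<in> set_spmf (add_parent \<pi> x) \<Longrightarrow> True" for x0 by simp
      show "spmf (add_parent \<pi> x) ?x0 * spmf (ancestral_line \<pi> ?x0) y = spmf (add_parent \<pi> x) ?x0 * ALf \<pi> ?x0 y"
      proof (cases "?x0 \<in> set_spmf (add_parent \<pi> x)")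
        case True
        then show ?thesis using IH by simp
      next
        case False
        then show ?thesis by (simp add: spmf_eq_0_set_spmf)
      qed
    qed
    have Wp: "Wout \<pi> t p = Wout \<pi> t p' * (pmf \<pi> (length cs) * prod_list (map (W \<pi>) (take i cs)) * prod_list (map (W \<pi>) (drop (Suc i) cs)))"
      using vp' ilt' by (simp add: p' Wout_append cs)
    have ALx: "ALf \<pi> x y = (1 - ?m) * Wout \<pi> t p"
      using p x y by (auto simp: ALf_def takep)
    show ?thesis
    proof (cases "?m = 0")
      case True
      have "pmf \<pi> (length cs) = 0" using ilt' by (intro mean_zero_pmf[OF m True]) linarith
      then show ?thesis using main True ALx Wp by simp
    next
      case False
      then have mpos: "0 < ?m" using m01 by simp
      have ap: "spmf (add_parent \<pi> x) ?x0 = pmf \<pi> (length cs) / ?m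
         * prod_list (map (W \<pi>) (take i cs)) * prod_list (map (W \<pi>) (drop (Suc i) cs))"
        unfolding x by (rule ap_formula[OF mpos m ilt' csi])
      have "spmf (ancestral_line \<pi> x) y = ?m * (spmf (add_parent \<pi> x) ?x0 * ALf \<pi> ?x0 y)"
        by (simp only: main single)
      also have "\<dots> = ?m * (pmf \<pi> (length cs) / ?m
         * prod_list (map (W \<pi>) (take i cs)) * prod_list (map (W \<pi>) (drop (Suc i) cs)) * ((1 - ?m) * Wout \<pi> t p'))"
        by (simp only: ap ALx0)
      also have "\<dots> = (1 - ?m) * Wout \<pi> t p"
        using mpos by (simp add: Wp field_simps)
      finally show ?thesis using ALx by simp
    qed
  qed
qed

lemma al_formula:
  assumes m: "mean_enn \<pi> < 1"
  shows "spmf (ancestral_line \<pi> x) y = ALf \<pi> x y"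
proof (cases "length (snd x) \<le> length (snd y)")
  case True
  then show ?thesis using al_formula_aux[OF m] by blast
next
  case False
  then have "y \<notin> set_spmf (ancestral_line \<pi> x)" using al_len[of \<pi>] by force
  then show ?thesis using False by (simp add: spmf_eq_0_set_spmf ALf_short)
qed

lemma TGWT_formula:
  assumes m: "mean_enn \<pi> < 1"
  shows "spmf (TGWT \<pi>) (t, a) = (if valid_addr t a then (1 - mean \<pi>) * W \<pi> t else 0)"
proof (cases "valid_addr t a")
  case True
  have "spmf (TGWT \<pi>) (t, a) = spmf (gw \<pi>) (subtree t a) * spmf (ancestral_line \<pi> (subtree t a, [])) (t, a)"
    unfolding TGWT_def
  proof (rule spmf_bind_single)
    fix t0 assume "t0 \<noteq> subtree t a"
    then show "spmf (ancestral_line \<pi> (t0, [])) (t, a) = 0"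
      by (simp add: al_formula[OF m] ALf_def)
  qed
  also have "\<dots> = W \<pi> (subtree t a) * ((1 - mean \<pi>) * Wout \<pi> t a)"
    using True by (simp add: al_formula[OF m] ALf_def gw_formula)
  also have "\<dots> = (1 - mean \<pi>) * W \<pi> t"
    using W_split[OF True, of \<pi>] by simp
  finally show ?thesis using True by simp
next
  case False
  have "spmf (TGWT \<pi>) (t, a) = 0"
    unfolding TGWT_def
    by (rule spmf_bind_zero) (use False in \<open>simp add: al_formula[OF m] ALf_def\<close>)
  then show ?thesis using False by simp
qed


lemma integral_rtree:
  assumes P: "\<And>x. pmf P x = (if valid_rtree x then c (fst x) else 0)"
  shows "(\<integral>\<^sup>+x. f x \<partial>measure_pmf P) = (\<integral>\<^sup>+t. ennreal (c t) * (\<Sum>a\<in>addrs t. f (t, a)) \<partial>count_space UNIV)"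
proof -
  have "(\<integral>\<^sup>+x. f x \<partial>measure_pmf P) = (\<integral>\<^sup>+x. ennreal (pmf P x) * f x \<partial>count_space UNIV)"
    by (rule nn_integral_measure_pmf)
  also have "\<dots> = (\<integral>\<^sup>+t. \<integral>\<^sup>+a. ennreal (pmf P (t, a)) * f (t, a) \<partial>count_space UNIV \<partial>count_space UNIV)"
    by (subst nn_integral_fst_count_space[symmetric]) simp
  also have "\<dots> = (\<integral>\<^sup>+t. ennreal (c t) * (\<Sum>a\<in>addrs t. f (t, a)) \<partial>count_space UNIV)"
  proof (rule nn_integral_cong)
    fix t
    have "(\<integral>\<^sup>+a. ennreal (pmf P (t, a)) * f (t, a) \<partial>count_space UNIV)
        = (\<integral>\<^sup>+a. ennreal (c t) * f (t, a) * indicator (addrs t) a \<partial>count_space UNIV)"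
      by (rule nn_integral_cong) (auto simp: P valid_rtree_def addrs_def split: split_indicator)
    also have "\<dots> = (\<integral>\<^sup>+a. ennreal (c t) * f (t, a) \<partial>count_space (addrs t))"
      by (simp add: nn_integral_count_space_indicator)
    also have "\<dots> = (\<Sum>a\<in>addrs t. ennreal (c t) * f (t, a))"
      by (simp add: nn_integral_count_space_finite finite_addrs)
    also have "\<dots> = ennreal (c t) * (\<Sum>a\<in>addrs t. f (t, a))"
      by (simp add: sum_distrib_left)
    finally show "(\<integral>\<^sup>+a. ennreal (pmf P (t, a)) * f (t, a) \<partial>count_space UNIV) = ennreal (c t) * (\<Sum>a\<in>addrs t. f (t, a))" .
  qed
  finally show ?thesis .
qed

lemma const_imp_unimodular:
  assumes P: "\<And>x. pmf P x = (if valid_rtree x then c (fst x) else 0)"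
  shows "unimodular P"
  unfolding unimodular_def
proof (intro allI)
  fix h :: "ptree \<Rightarrow> nat list \<Rightarrow> nat list \<Rightarrow> ennreal"
  show "(\<integral>\<^sup>+x. (\<Sum>u\<in>addrs (fst x). h (fst x) (snd x) u) \<partial>measure_pmf P)
      = (\<integral>\<^sup>+x. (\<Sum>u\<in>addrs (fst x). h (fst x) u (snd x)) \<partial>measure_pmf P)"
    unfolding integral_rtree[OF P] fst_conv snd_conv
    by (rule nn_integral_cong) (rule arg_cong[where f = "\<lambda>z. _ * z"], rule sum.swap)
qed

lemma unimodular_imp_const:
  assumes U: "unimodular P" and ab: "valid_addr t a" "valid_addr t b"
  shows "pmf P (t, a) = pmf P (t, b)"
proof -
  define h where "h = (\<lambda>t' a' b'. if t' = t \<and> a' = a \<and> b' = b then 1 else (0::ennreal))"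
  have ina: "a \<in> addrs t" and inb: "b \<in> addrs t" using ab by (auto simp: addrs_def)
  have L: "(\<Sum>u\<in>addrs (fst x). h (fst x) (snd x) u) = indicator {(t, a)} x" for x
    using inb finite_addrs[of t] by (cases x) (auto simp: h_def split: split_indicator)
  have R: "(\<Sum>u\<in>addrs (fst x). h (fst x) u (snd x)) = indicator {(t, b)} x" for x
    using ina finite_addrs[of t] by (cases x) (auto simp: h_def split: split_indicator)
  have "(\<integral>\<^sup>+x. (\<Sum>u\<in>addrs (fst x). h (fst x) (snd x) u) \<partial>measure_pmf P)
      = (\<integral>\<^sup>+x. (\<Sum>u\<in>addrs (fst x). h (fst x) u (snd x)) \<partial>measure_pmf P)"
    using U unfolding unimodular_def by blast
  then have "emeasure (measure_pmf P) {(t, a)} = emeasure (measure_pmf P) {(t, b)}"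
    by (simp add: L R)
  then show ?thesis by (simp add: emeasure_pmf_single)
qed


definition glue :: "rtree \<Rightarrow> ptree \<Rightarrow> rtree" where
  "glue n d = (graft (fst n) (snd n) d, snd n)"

definition VN :: "rtree set" where
  "VN = {n. valid_rtree n \<and> subtree (fst n) (snd n) = Node []}"

lemma nondesc_VN: "valid_rtree x \<Longrightarrow> nondesc_tree x \<in> VN"
  by (cases x) (auto simp: VN_def nondesc_tree_def valid_rtree_def valid_graft subtree_graft)

lemma glue_nondesc: "valid_rtree x \<Longrightarrow> glue (nondesc_tree x) (subtree (fst x) (snd x)) = x"
  by (cases x) (auto simp: glue_def nondesc_tree_def valid_rtree_def graft_graft graft_subtree)

lemma glue_valid: "n \<in> VN \<Longrightarrow> valid_rtree (glue n d)"
  by (cases n) (auto simp: VN_def glue_def valid_rtree_def valid_graft)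

lemma nondesc_glue: "n \<in> VN \<Longrightarrow> nondesc_tree (glue n d) = n"
  by (cases n) (auto simp: VN_def glue_def nondesc_tree_def valid_rtree_def graft_graft dest: graft_subtree)

lemma nondesc_glue': "n \<in> VN \<Longrightarrow> nondesc_tree (glue n d) = n"
  by (rule nondesc_glue)

lemma subtree_glue: "n \<in> VN \<Longrightarrow> subtree (fst (glue n d)) (snd (glue n d)) = d"
  by (cases n) (auto simp: VN_def glue_def valid_rtree_def subtree_graft)

lemma root_degree_glue: "n \<in> VN \<Longrightarrow> root_degree (glue n d) = length (children d)"
  by (simp add: root_degree_def subtree_glue)

lemma bij_glue: "bij_betw (\<lambda>(n, d). glue n d) (VN \<times> UNIV) {x. valid_rtree x}"
proof (rule bij_betw_byWitness[where f' = "\<lambda>x. (nondesc_tree x, subtree (fst x) (snd x))"])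
  show "\<forall>a\<in>VN \<times> UNIV. (\<lambda>x. (nondesc_tree x, subtree (fst x) (snd x))) ((\<lambda>(n, d). glue n d) a) = a"
    by (auto simp: nondesc_glue subtree_glue)
  show "\<forall>a'\<in>{x. valid_rtree x}. (\<lambda>(n, d). glue n d) (nondesc_tree a', subtree (fst a') (snd a')) = a'"
    by (auto simp: glue_nondesc)
  show "(\<lambda>(n, d). glue n d) ` (VN \<times> UNIV) \<subseteq> {x. valid_rtree x}"
    by (auto simp: glue_valid)
  show "(\<lambda>x. (nondesc_tree x, subtree (fst x) (snd x))) ` {x. valid_rtree x} \<subseteq> VN \<times> UNIV"
    by (auto simp: nondesc_VN)
qed

lemma decomp:
  "(\<integral>\<^sup>+x. indicator {x. valid_rtree x} x * f x \<partial>count_space UNIV)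
   = (\<integral>\<^sup>+n. indicator VN n * (\<integral>\<^sup>+d. f (glue n d) \<partial>count_space UNIV) \<partial>count_space UNIV)"
proof -
  have "(\<integral>\<^sup>+n. indicator VN n * (\<integral>\<^sup>+d. f (glue n d) \<partial>count_space UNIV) \<partial>count_space UNIV)
      = (\<integral>\<^sup>+n. \<integral>\<^sup>+d. indicator VN n * f (glue n d) \<partial>count_space UNIV \<partial>count_space UNIV)"
    by (rule nn_integral_cong) (simp add: nn_integral_cmult)
  also have "\<dots> = (\<integral>\<^sup>+p. indicator VN (fst p) * f (glue (fst p) (snd p)) \<partial>count_space UNIV)"
    by (subst nn_integral_fst_count_space[symmetric]) simp
  also have "\<dots> = (\<integral>\<^sup>+p. f ((\<lambda>(n, d). glue n d) p) * indicator (VN \<times> UNIV) p \<partial>count_space UNIV)"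
    by (rule nn_integral_cong) (auto split: split_indicator simp: mult.commute)
  also have "\<dots> = (\<integral>\<^sup>+p. f ((\<lambda>(n, d). glue n d) p) \<partial>count_space (VN \<times> UNIV))"
    by (simp add: nn_integral_count_space_indicator)
  also have "\<dots> = (\<integral>\<^sup>+x. f x \<partial>count_space {x. valid_rtree x})"
    by (rule nn_integral_bij_count_space[OF bij_glue])
  also have "\<dots> = (\<integral>\<^sup>+x. indicator {x. valid_rtree x} x * f x \<partial>count_space UNIV)"
    by (simp add: nn_integral_count_space_indicator mult.commute)
  finally show ?thesis by simp
qed

lemma indep_from_product:
  assumes E: "\<And>A B. emeasure (measure_pmf P) {x. f x \<in> A \<and> g x \<in> B} = G A * F B"
  shows "indep_rv P f g"
  unfolding indep_rv_def
proof (intro allI)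
  fix A B
  have e1: "emeasure (measure_pmf P) {x. f x \<in> A} = G A * F UNIV" using E[of A UNIV] by simp
  have e2: "emeasure (measure_pmf P) {x. g x \<in> B} = G UNIV * F B" using E[of UNIV B] by simp
  have e3: "G UNIV * F UNIV = 1" using E[of UNIV UNIV] by (simp add: emeasure_pmf)
  have "emeasure (measure_pmf P) {x. f x \<in> A \<and> g x \<in> B} = G A * F B * (G UNIV * F UNIV)"
    by (simp add: E e3)
  also have "\<dots> = emeasure (measure_pmf P) {x. f x \<in> A} * emeasure (measure_pmf P) {x. g x \<in> B}"
    by (simp add: e1 e2 ac_simps)
  finally have "ennreal (measure_pmf.prob P {x. f x \<in> A \<and> g x \<in> B})
      = ennreal (measure_pmf.prob P {x. f x \<in> A}) * ennreal (measure_pmf.prob P {x. g x \<in> B})"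
    by (simp add: measure_pmf.emeasure_eq_measure)
  then show "measure_pmf.prob P {x. f x \<in> A \<and> g x \<in> B} = measure_pmf.prob P {x. f x \<in> A} * measure_pmf.prob P {x. g x \<in> B}"
    by (simp add: ennreal_mult'[symmetric])
qed

lemma W_glue: "n \<in> VN \<Longrightarrow> W \<pi> (fst (glue n d)) = Wout \<pi> (fst n) (snd n) * W \<pi> d"
proof -
  assume n: "n \<in> VN"
  have v: "valid_addr (fst n) (snd n)" using n by (auto simp: VN_def valid_rtree_def)
  have "W \<pi> (fst (glue n d)) = Wout \<pi> (fst (glue n d)) (snd n) * W \<pi> (subtree (fst (glue n d)) (snd n))"
    using glue_valid[OF n, of d] by (intro W_split) (simp add: valid_rtree_def glue_def)
  also have "\<dots> = Wout \<pi> (fst n) (snd n) * W \<pi> d"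
    using v subtree_glue[OF n, of d] by (simp add: glue_def Wout_graft)
  finally show ?thesis .
qed

lemma indep_product_form:
  assumes P: "\<And>x. pmf P x = (if valid_rtree x then c * W \<pi> (fst x) else 0)" and c: "0 \<le> c"
  shows "indep_rv P root_degree nondesc_tree"
proof (rule indep_from_product)
  fix A B
  have "emeasure (measure_pmf P) {x. root_degree x \<in> A \<and> nondesc_tree x \<in> B}
      = (\<integral>\<^sup>+x. ennreal (pmf P x) * indicator {x. root_degree x \<in> A \<and> nondesc_tree x \<in> B} x \<partial>count_space UNIV)"
    by (simp add: nn_integral_measure_pmf[symmetric])
  also have "\<dots> = (\<integral>\<^sup>+x. indicator {x. valid_rtree x} x * (ennreal (c * W \<pi> (fst x)) * indicator {x. root_degree x \<in> A \<and> nondesc_tree x \<in> B} x) \<partial>count_space UNIV)"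
    by (rule nn_integral_cong) (simp add: P split: split_indicator)
  also have "\<dots> = (\<integral>\<^sup>+n. indicator VN n * (\<integral>\<^sup>+d. ennreal (c * W \<pi> (fst (glue n d))) * indicator {x. root_degree x \<in> A \<and> nondesc_tree x \<in> B} (glue n d) \<partial>count_space UNIV) \<partial>count_space UNIV)"
    by (rule decomp)
  also have "\<dots> = (\<integral>\<^sup>+n. indicator VN n * (ennreal (c * Wout \<pi> (fst n) (snd n)) * indicator B n * (\<integral>\<^sup>+d. ennreal (W \<pi> d) * indicator {d. length (children d) \<in> A} d \<partial>count_space UNIV)) \<partial>count_space UNIV)"
  proof (rule nn_integral_cong)
    fix n
    show "indicator VN n * (\<integral>\<^sup>+d. ennreal (c * W \<pi> (fst (glue n d))) * indicator {x. root_degree x \<in> A \<and> nondesc_tree x \<in> B} (glue n d) \<partial>count_space UNIV)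
      = indicator VN n * (ennreal (c * Wout \<pi> (fst n) (snd n)) * indicator B n * (\<integral>\<^sup>+d. ennreal (W \<pi> d) * indicator {d. length (children d) \<in> A} d \<partial>count_space UNIV))"
    proof (cases "n \<in> VN")
      case True
      have "(\<integral>\<^sup>+d. ennreal (c * W \<pi> (fst (glue n d))) * indicator {x. root_degree x \<in> A \<and> nondesc_tree x \<in> B} (glue n d) \<partial>count_space UNIV)
        = (\<integral>\<^sup>+d. (ennreal (c * Wout \<pi> (fst n) (snd n)) * indicator B n) * (ennreal (W \<pi> d) * indicator {d. length (children d) \<in> A} d) \<partial>count_space UNIV)"
        using True c by (intro nn_integral_cong) (auto simp: W_glue root_degree_glue nondesc_glue ennreal_mult' Wout_nonneg mult.assoc split: split_indicator)
      also have "\<dots> = ennreal (c * Wout \<pi> (fst n) (snd n)) * indicator B n * (\<integral>\<^sup>+d. ennreal (W \<pi> d) * indicator {d. length (children d) \<in> A} d \<partial>count_space UNIV)"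
        by (simp add: nn_integral_cmult)
      finally show ?thesis by simp
    qed simp
  qed
  also have "\<dots> = (\<integral>\<^sup>+d. ennreal (W \<pi> d) * indicator {d. length (children d) \<in> A} d \<partial>count_space UNIV)
      * (\<integral>\<^sup>+n. indicator VN n * (ennreal (c * Wout \<pi> (fst n) (snd n)) * indicator B n) \<partial>count_space UNIV)"
  proof -
    define Gd where "Gd = (\<integral>\<^sup>+d. ennreal (W \<pi> d) * indicator {d. length (children d) \<in> A} d \<partial>count_space UNIV)"
    have "(\<integral>\<^sup>+n. indicator VN n * (ennreal (c * Wout \<pi> (fst n) (snd n)) * indicator B n * Gd) \<partial>count_space UNIV)
       = (\<integral>\<^sup>+n. (indicator VN n * (ennreal (c * Wout \<pi> (fst n) (snd n)) * indicator B n)) * Gd \<partial>count_space UNIV)"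
      by (simp only: mult.assoc)
    also have "\<dots> = (\<integral>\<^sup>+n. indicator VN n * (ennreal (c * Wout \<pi> (fst n) (snd n)) * indicator B n) \<partial>count_space UNIV) * Gd"
      by (rule nn_integral_multc) simp
    finally show ?thesis unfolding Gd_def by (simp only: mult.commute)
  qed
  finally show "emeasure (measure_pmf P) {x. root_degree x \<in> A \<and> nondesc_tree x \<in> B} = 
      (\<lambda>A. \<integral>\<^sup>+d. ennreal (W \<pi> d) * indicator {d. length (children d) \<in> A} d \<partial>count_space UNIV) A
      * (\<lambda>B. \<integral>\<^sup>+n. indicator VN n * (ennreal (c * Wout \<pi> (fst n) (snd n)) * indicator B n) \<partial>count_space UNIV) B"
    by simp
qed


lemma tree_F1: "valid_addr s a \<Longrightarrow> j < length xs \<Longrightarrow> valid_addr (graft s a (Node xs)) (a @ [j])"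
  by (simp add: valid_graft_append)

lemma tree_F2: "valid_addr s a \<Longrightarrow> subtree (graft s a (Node xs)) (a @ [j]) = xs ! j"
  by (simp add: subtree_append subtree_graft)

lemma tree_F3: "valid_addr s a \<Longrightarrow> length cs = j \<Longrightarrow>
   graft (graft s a (Node (cs @ X # rest))) (a @ [j]) Y = graft s a (Node (cs @ Y # rest))"
  by (simp add: graft_graft_append list_update_append)

context
  fixes P :: "rtree pmf" and q :: "ptree \<Rightarrow> real" and \<pi> :: "nat pmf"
  assumes P: "\<And>x. pmf P x = (if valid_rtree x then q (fst x) else 0)"
    and qnn: "\<And>t. 0 \<le> q t"
    and indep: "indep_rv P root_degree nondesc_tree"
    and pi_def: "\<pi> = map_pmf root_degree P"
begin

definition mu :: "rtree \<Rightarrow> ennreal" where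
  "mu n = (\<integral>\<^sup>+d. ennreal (q (fst (glue n d))) \<partial>count_space UNIV)"

lemma level_set:
  assumes n: "n \<in> VN"
  shows "(\<integral>\<^sup>+x. ennreal (pmf P x) * (indicator {x. nondesc_tree x = n} x * \<phi> x) \<partial>count_space UNIV)
       = (\<integral>\<^sup>+d. ennreal (q (fst (glue n d))) * \<phi> (glue n d) \<partial>count_space UNIV)"
proof -
  have "(\<integral>\<^sup>+x. ennreal (pmf P x) * (indicator {x. nondesc_tree x = n} x * \<phi> x) \<partial>count_space UNIV)
      = (\<integral>\<^sup>+x. indicator {x. valid_rtree x} x * (ennreal (q (fst x)) * (indicator {x. nondesc_tree x = n} x * \<phi> x)) \<partial>count_space UNIV)"
    by (rule nn_integral_cong) (simp add: P split: split_indicator)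
  also have "\<dots> = (\<integral>\<^sup>+n'. indicator VN n' * (\<integral>\<^sup>+d. ennreal (q (fst (glue n' d))) * (indicator {x. nondesc_tree x = n} (glue n' d) * \<phi> (glue n' d)) \<partial>count_space UNIV) \<partial>count_space UNIV)"
    by (rule decomp)
  also have "\<dots> = (\<integral>\<^sup>+n'. (\<integral>\<^sup>+d. ennreal (q (fst (glue n d))) * \<phi> (glue n d) \<partial>count_space UNIV) * indicator {n} n' \<partial>count_space UNIV)"
  proof (rule nn_integral_cong)
    fix n'
    show "indicator VN n' * (\<integral>\<^sup>+d. ennreal (q (fst (glue n' d))) * (indicator {x. nondesc_tree x = n} (glue n' d) * \<phi> (glue n' d)) \<partial>count_space UNIV)
      = (\<integral>\<^sup>+d. ennreal (q (fst (glue n d))) * \<phi> (glue n d) \<partial>count_space UNIV) * indicator {n} n'"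
    proof (cases "n' \<in> VN")
      case True
      then show ?thesis using n by (auto simp: nondesc_glue split: split_indicator)
    next
      case False
      then show ?thesis using n by (auto split: split_indicator)
    qed
  qed
  also have "\<dots> = (\<integral>\<^sup>+d. ennreal (q (fst (glue n d))) * \<phi> (glue n d) \<partial>count_space UNIV)"
    by simp
  finally show ?thesis .
qed

lemma emeasure_eq_sum: "emeasure (measure_pmf P) A = (\<integral>\<^sup>+x. ennreal (pmf P x) * indicator A x \<partial>count_space UNIV)"
  by (simp add: nn_integral_measure_pmf[symmetric])

lemma mu_eq: "n \<in> VN \<Longrightarrow> emeasure (measure_pmf P) {x. nondesc_tree x = n} = mu n"
  using level_set[of n "\<lambda>_. 1"] by (simp add: emeasure_eq_sum mu_def)

lemma indep_level:
  assumes n: "n \<in> VN"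
  shows "(\<integral>\<^sup>+d. ennreal (q (fst (glue n d))) * indicator {d. length (children d) = k} d \<partial>count_space UNIV)
       = ennreal (pmf \<pi> k) * mu n"
proof -
  have "(\<integral>\<^sup>+d. ennreal (q (fst (glue n d))) * indicator {d. length (children d) = k} d \<partial>count_space UNIV)
      = (\<integral>\<^sup>+x. ennreal (pmf P x) * (indicator {x. nondesc_tree x = n} x * indicator {x. root_degree x = k} x) \<partial>count_space UNIV)"
    using n by (subst level_set) (auto intro!: nn_integral_cong simp: root_degree_glue split: split_indicator)
  also have "\<dots> = emeasure (measure_pmf P) {x. root_degree x \<in> {k} \<and> nondesc_tree x \<in> {n}}"
    by (simp add: emeasure_eq_sum) (auto intro!: nn_integral_cong split: split_indicator)
  also have "\<dots> = ennreal (measure_pmf.prob P {x. root_degree x \<in> {k} \<and> nondesc_tree x \<in> {n}})"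
    by (simp add: measure_pmf.emeasure_eq_measure)
  also have "\<dots> = ennreal (measure_pmf.prob P {x. root_degree x \<in> {k}}) * ennreal (measure_pmf.prob P {x. nondesc_tree x \<in> {n}})"
  proof -
    have "measure_pmf.prob P {x. root_degree x \<in> {k} \<and> nondesc_tree x \<in> {n}} = measure_pmf.prob P {x. root_degree x \<in> {k}} * measure_pmf.prob P {x. nondesc_tree x \<in> {n}}"
      using indep unfolding indep_rv_def by blast
    then show ?thesis by (simp only: ennreal_mult'[OF measure_nonneg])
  qed
  also have "measure_pmf.prob P {x. root_degree x \<in> {k}} = pmf \<pi> k"
    by (simp add: pi_def pmf_map vimage_def)
  also have "ennreal (measure_pmf.prob P {x. nondesc_tree x \<in> {n}}) = mu n"
    using mu_eq[OF n] by (simp add: measure_pmf.emeasure_eq_measure)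
  finally show ?thesis .
qed


lemma bij_snoc: "bij_betw (\<lambda>(cs, D). cs @ [D]) ({cs. length cs = j} \<times> UNIV) {cs. length cs = Suc j}"
proof (rule bij_betw_byWitness[where f' = "\<lambda>cs. (butlast cs, last cs)"])
  show "\<forall>a\<in>{cs. length cs = j} \<times> UNIV. (butlast ((\<lambda>(cs, D). cs @ [D]) a), last ((\<lambda>(cs, D). cs @ [D]) a)) = a"
    by auto
  show "\<forall>a'\<in>{cs. length cs = Suc j}. (\<lambda>(cs, D). cs @ [D]) (butlast a', last a') = a'"
    by (auto simp: append_butlast_last_id[symmetric] simp del: append_butlast_last_id)
       (metis append_butlast_last_id list.size(3) nat.distinct(1))
  show "(\<lambda>(cs, D). cs @ [D]) ` ({cs. length cs = j} \<times> UNIV) \<subseteq> {cs. length cs = Suc j}" by auto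
  show "(\<lambda>cs. (butlast cs, last cs)) ` {cs. length cs = Suc j} \<subseteq> {cs. length cs = j} \<times> UNIV" by auto
qed

lemma bij_Node: "bij_betw Node {cs. length cs = k} {d. length (children d) = k}"
proof (rule bij_betw_byWitness[where f' = children])
  show "\<forall>a\<in>{d. length (children d) = k}. Node (children a) = a" by (metis children.simps ptree.exhaust)
qed auto

lemma core: "\<forall>n\<in>VN. ennreal (q (fst (glue n d))) = mu n * ennreal (W \<pi> d)"
proof (induction d)
  case (Node ds)
  show ?case
  proof
    fix n assume n: "n \<in> VN"
    obtain s a where na: "n = (s, a)" by (cases n)
    have vs: "valid_addr s a" and leaf: "subtree s a = Node []" using n na by (auto simp: VN_def valid_rtree_def)
    define k where "k = length ds"
    define G where "G j = (\<integral>\<^sup>+cs. indicator {cs. length cs = j} cs * ennreal (q (graft s a (Node (cs @ drop j ds)))) \<partial>count_space UNIV)" for j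
    have fstglue: "fst (glue n d) = graft s a d" for d by (simp add: glue_def na)
    have G0: "G 0 = ennreal (q (graft s a (Node ds)))"
    proof -
      have "G 0 = (\<integral>\<^sup>+cs. ennreal (q (graft s a (Node (cs @ ds)))) * indicator {[]} cs \<partial>count_space UNIV)"
        unfolding G_def by (rule nn_integral_cong) (auto split: split_indicator)
      also have "\<dots> = ennreal (q (graft s a (Node ds)))" by simp
      finally show ?thesis .
    qed
    have Gk: "G k = ennreal (pmf \<pi> k) * mu n"
    proof -
      have "G k = (\<integral>\<^sup>+cs. ennreal (q (graft s a (Node cs))) \<partial>count_space {cs. length cs = k})"
        unfolding G_def k_def by (subst nn_integral_count_space_indicator) (auto intro!: nn_integral_cong simp: mult.commute split: split_indicator)
      also have "\<dots> = (\<integral>\<^sup>+d. ennreal (q (graft s a d)) \<partial>count_space {d. length (children d) = k})"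
        by (rule nn_integral_bij_count_space[OF bij_Node, where f = "\<lambda>d. ennreal (q (graft s a d))"])
      also have "\<dots> = (\<integral>\<^sup>+d. ennreal (q (fst (glue n d))) * indicator {d. length (children d) = k} d \<partial>count_space UNIV)"
        by (simp add: nn_integral_count_space_indicator fstglue)
      also have "\<dots> = ennreal (pmf \<pi> k) * mu n" by (rule indep_level[OF n])
      finally show ?thesis .
    qed
    have Gstep: "G j = ennreal (W \<pi> (ds ! j)) * G (Suc j)" if j: "j < k" for j
    proof -
      have IH: "\<forall>n\<in>VN. ennreal (q (fst (glue n (ds ! j)))) = mu n * ennreal (W \<pi> (ds ! j))"
        using Node.IH j k_def by simp
      define H where "H cs' = ennreal (q (graft s a (Node (cs' @ drop (Suc j) ds))))" for cs'
      have inner: "ennreal (q (graft s a (Node (cs @ drop j ds)))) = ennreal (W \<pi> (ds ! j)) * (\<integral>\<^sup>+D. H (cs @ [D]) \<partial>count_space UNIV)"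
        if cs: "length cs = j" for cs
      proof -
        define ncs where "ncs = (graft s a (Node (cs @ Node [] # drop (Suc j) ds)), a @ [j])"
        have ncs: "ncs \<in> VN" unfolding ncs_def VN_def valid_rtree_def
          using vs cs by (auto simp: tree_F1 tree_F2 nth_append)
        have fg: "fst (glue ncs D) = graft s a (Node (cs @ D # drop (Suc j) ds))" for D
          unfolding ncs_def glue_def using vs cs by (simp add: tree_F3)
        have dsj: "cs @ drop j ds = cs @ ds ! j # drop (Suc j) ds"
          using j k_def by (simp add: Cons_nth_drop_Suc)
        have "ennreal (q (graft s a (Node (cs @ drop j ds)))) = ennreal (q (fst (glue ncs (ds ! j))))"
          by (simp add: fg dsj)
        also have "\<dots> = mu ncs * ennreal (W \<pi> (ds ! j))" using IH ncs by blast
        also have "mu ncs = (\<integral>\<^sup>+D. H (cs @ [D]) \<partial>count_space UNIV)"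
          unfolding mu_def H_def fg by simp
        finally show ?thesis by (simp add: mult.commute)
      qed
      have "G j = (\<integral>\<^sup>+cs. ennreal (W \<pi> (ds ! j)) * (\<integral>\<^sup>+D. indicator {cs. length cs = j} cs * H (cs @ [D]) \<partial>count_space UNIV) \<partial>count_space UNIV)"
        unfolding G_def
      proof (rule nn_integral_cong)
        fix cs
        show "indicator {cs. length cs = j} cs * ennreal (q (graft s a (Node (cs @ drop j ds))))
          = ennreal (W \<pi> (ds ! j)) * (\<integral>\<^sup>+D. indicator {cs. length cs = j} cs * H (cs @ [D]) \<partial>count_space UNIV)"
          by (cases "length cs = j") (simp_all add: inner nn_integral_cmult)
      qed
      also have "\<dots> = ennreal (W \<pi> (ds ! j)) * (\<integral>\<^sup>+cs. \<integral>\<^sup>+D. indicator {cs. length cs = j} cs * H (cs @ [D]) \<partial>count_space UNIV \<partial>count_space UNIV)"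
        by (simp add: nn_integral_cmult)
      also have "(\<integral>\<^sup>+cs. \<integral>\<^sup>+D. indicator {cs. length cs = j} cs * H (cs @ [D]) \<partial>count_space UNIV \<partial>count_space UNIV)
          = (\<integral>\<^sup>+p. indicator {cs. length cs = j} (fst p) * H (fst p @ [snd p]) \<partial>count_space UNIV)"
        by (subst nn_integral_fst_count_space[symmetric]) simp
      also have "\<dots> = (\<integral>\<^sup>+p. H ((\<lambda>(cs, D). cs @ [D]) p) \<partial>count_space ({cs. length cs = j} \<times> UNIV))"
        by (subst nn_integral_count_space_indicator) (auto intro!: nn_integral_cong simp: mult.commute split: split_indicator)
      also have "\<dots> = (\<integral>\<^sup>+cs'. H cs' \<partial>count_space {cs. length cs = Suc j})"
        by (rule nn_integral_bij_count_space[OF bij_snoc])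
      also have "\<dots> = G (Suc j)"
        unfolding G_def H_def by (subst nn_integral_count_space_indicator) (auto intro!: nn_integral_cong simp: mult.commute split: split_indicator)
      finally show ?thesis .
    qed
    have Gprod: "G (k - i) = (\<Prod>l\<in>{k - i..<k}. ennreal (W \<pi> (ds ! l))) * G k" if "i \<le> k" for i
      using that
    proof (induction i)
      case 0
      then show ?case by simp
    next
      case (Suc i)
      have "k - Suc i < k" using Suc.prems by simp
      then have "G (k - Suc i) = ennreal (W \<pi> (ds ! (k - Suc i))) * G (Suc (k - Suc i))" by (rule Gstep)
      also have "Suc (k - Suc i) = k - i" using Suc.prems by simp
      also have "G (k - i) = (\<Prod>l\<in>{k - i..<k}. ennreal (W \<pi> (ds ! l))) * G k" using Suc by simp
      also have "ennreal (W \<pi> (ds ! (k - Suc i))) * ((\<Prod>l\<in>{k - i..<k}. ennreal (W \<pi> (ds ! l))) * G k)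
          = (\<Prod>l\<in>{k - Suc i..<k}. ennreal (W \<pi> (ds ! l))) * G k"
      proof -
        have "{k - Suc i..<k} = insert (k - Suc i) {k - i..<k}" using Suc.prems by auto
        moreover have "(\<Prod>l\<in>insert (k - Suc i) {k - i..<k}. ennreal (W \<pi> (ds ! l)))
           = ennreal (W \<pi> (ds ! (k - Suc i))) * (\<Prod>l\<in>{k - i..<k}. ennreal (W \<pi> (ds ! l)))"
          using Suc.prems by (subst prod.insert) auto
        ultimately show ?thesis by (simp add: mult.assoc)
      qed
      finally show ?case .
    qed
    have "ennreal (q (fst (glue n (Node ds)))) = G 0" by (simp add: G0 fstglue)
    also have "\<dots> = (\<Prod>l\<in>{0..<k}. ennreal (W \<pi> (ds ! l))) * G k" using Gprod[of k] by simp
    also have "\<dots> = mu n * ennreal (W \<pi> (Node ds))"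
    proof -
      have "(\<Prod>l\<in>{0..<k}. ennreal (W \<pi> (ds ! l))) = ennreal (prod_list (map (W \<pi>) ds))"
        by (simp add: prod_ennreal W_nonneg prod.list_conv_set_nth k_def)
      then show ?thesis using Gk by (simp add: ennreal_mult' ac_simps k_def)
    qed
    finally show "ennreal (q (fst (glue n (Node ds)))) = mu n * ennreal (W \<pi> (Node ds))" .
  qed
qed

end


lemma forward:
  assumes m: "mean_enn \<pi> < 1" and eq: "spmf_of_pmf P = TGWT \<pi>"
  shows "unimodular P \<and> indep_rv P root_degree nondesc_tree"
proof -
  have Pf: "pmf P x = (if valid_rtree x then (1 - mean \<pi>) * W \<pi> (fst x) else 0)" for x
  proof -
    have "pmf P x = spmf (TGWT \<pi>) x" by (simp add: eq[symmetric])
    then show ?thesis by (cases x) (simp add: TGWT_formula[OF m] valid_rtree_def)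
  qed
  have c: "0 \<le> 1 - mean \<pi>" using mean_facts[OF m] by simp
  show ?thesis
    using const_imp_unimodular[of P "\<lambda>t. (1 - mean \<pi>) * W \<pi> t", OF Pf]
      indep_product_form[OF Pf c] by simp
qed

lemma backward:
  assumes valid: "\<forall>x\<in>set_pmf P. valid_rtree x" and U: "unimodular P"
    and I: "indep_rv P root_degree nondesc_tree"
  shows "\<exists>\<pi>. mean_enn \<pi> < 1 \<and> spmf_of_pmf P = TGWT \<pi>"
proof -
  define q where "q t = pmf P (t, [])" for t
  have qnn: "0 \<le> q t" for t by (simp add: q_def pmf_nonneg)
  have Pq: "pmf P x = (if valid_rtree x then q (fst x) else 0)" for x
  proof (cases "valid_rtree x")
    case True
    then show ?thesis unfolding q_def
      by (cases x) (auto simp: valid_rtree_def intro: unimodular_imp_const[OF U])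
  next
    case False
    then have "x \<notin> set_pmf P" using valid by auto
    then show ?thesis using False by (simp add: set_pmf_iff)
  qed
  define \<pi> where "\<pi> = map_pmf root_degree P"
  note core' = core[OF Pq qnn I \<pi>_def]
  define n0 :: rtree where "n0 = (Node [], [])"
  have n0: "n0 \<in> VN" by (simp add: n0_def VN_def valid_rtree_def)
  define M where "M = (\<integral>\<^sup>+d. ennreal (q d) \<partial>count_space UNIV)"
  have qW: "ennreal (q t) = M * ennreal (W \<pi> t)" for t
  proof -
    have "ennreal (q (fst (glue n0 t))) = mu q n0 * ennreal (W \<pi> t)" using core' n0 by blast
    moreover have "mu q n0 = M" unfolding mu_def[OF Pq qnn I \<pi>_def] M_def
      by (simp add: glue_def n0_def)
    ultimately show ?thesis by (simp add: glue_def n0_def)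
  qed
  have card1: "1 \<le> card (addrs t)" for t
    using finite_addrs[of t] Nil_in_addrs[of t] by (metis card_0_eq empty_iff less_one not_le)
  have total: "1 = (\<integral>\<^sup>+t. ennreal (q t) * of_nat (card (addrs t)) \<partial>count_space UNIV)"
  proof -
    have "1 = (\<integral>\<^sup>+x. 1 \<partial>measure_pmf P)" by (simp add: emeasure_pmf)
    also have "\<dots> = (\<integral>\<^sup>+t. ennreal (q t) * of_nat (card (addrs t)) \<partial>count_space UNIV)"
      by (subst integral_rtree[OF Pq]) simp
    finally show ?thesis .
  qed
  have meanq: "mean_enn \<pi> = (\<integral>\<^sup>+t. ennreal (q t) * of_nat (card (addrs t) - 1) \<partial>count_space UNIV)"
  proof -
    have "mean_enn \<pi> = (\<integral>\<^sup>+x. ennreal (real (root_degree x)) \<partial>measure_pmf P)"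
      by (simp add: mean_enn_def \<pi>_def)
    also have "\<dots> = (\<integral>\<^sup>+t. ennreal (q t) * (\<Sum>a\<in>addrs t. ennreal (real (root_degree (t, a)))) \<partial>count_space UNIV)"
      by (rule integral_rtree[OF Pq])
    also have "\<dots> = (\<integral>\<^sup>+t. ennreal (q t) * of_nat (card (addrs t) - 1) \<partial>count_space UNIV)"
    proof (rule nn_integral_cong)
      fix t
      have "(\<Sum>a\<in>addrs t. ennreal (real (root_degree (t, a)))) = of_nat (\<Sum>a\<in>addrs t. root_degree (t, a))"
        by (simp add: ennreal_of_nat_eq_real_of_nat)
      also have "(\<Sum>a\<in>addrs t. root_degree (t, a)) = card (addrs t) - 1"
        using sum_degree[of t] by (simp add: root_degree_def)
      finally show "ennreal (q t) * (\<Sum>a\<in>addrs t. ennreal (real (root_degree (t, a)))) = ennreal (q t) * of_nat (card (addrs t) - 1)"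
        by simp
    qed
    finally show ?thesis .
  qed
  have sum1: "1 = mean_enn \<pi> + M"
  proof -
    have "(\<integral>\<^sup>+t. ennreal (q t) * of_nat (card (addrs t)) \<partial>count_space UNIV)
        = (\<integral>\<^sup>+t. ennreal (q t) * of_nat (card (addrs t) - 1) + ennreal (q t) \<partial>count_space UNIV)"
    proof (rule nn_integral_cong)
      fix t
      have "card (addrs t) = (card (addrs t) - 1) + 1" using card1[of t] by simp
      then have "(of_nat (card (addrs t)) :: ennreal) = of_nat (card (addrs t) - 1) + 1"
        by (metis of_nat_1 of_nat_add)
      then show "ennreal (q t) * of_nat (card (addrs t)) = ennreal (q t) * of_nat (card (addrs t) - 1) + ennreal (q t)"
        by (simp add: distrib_left)
    qed
    also have "\<dots> = mean_enn \<pi> + M"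
      by (subst nn_integral_add) (auto simp: meanq M_def)
    finally show ?thesis using total by simp
  qed
  obtain x0 where x0: "x0 \<in> set_pmf P" using set_pmf_not_empty[of P] by blast
  have qpos: "0 < q (fst x0)"
  proof -
    have "0 < pmf P x0" using x0 by (simp add: pmf_positive)
    moreover have "valid_rtree x0" using x0 valid by blast
    ultimately show ?thesis using Pq[of x0] by simp
  qed
  have Mpos: "0 < M"
  proof -
    have "ennreal (q (fst x0)) = (\<integral>\<^sup>+d. ennreal (q d) * indicator {fst x0} d \<partial>count_space UNIV)"
      by simp
    also have "\<dots> \<le> M" unfolding M_def by (rule nn_integral_mono) (auto split: split_indicator)
    finally have le: "ennreal (q (fst x0)) \<le> M" .
    have "0 < ennreal (q (fst x0))" using qpos by simp
    then show ?thesis using le by (rule less_le_trans)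
  qed
  have Mle: "M \<le> 1"
  proof -
    have "M \<le> mean_enn \<pi> + M" by simp
    then show ?thesis using sum1 by simp
  qed
  have mle: "mean_enn \<pi> \<le> 1"
  proof -
    have "mean_enn \<pi> \<le> mean_enn \<pi> + M" by simp
    then show ?thesis using sum1 by simp
  qed
  have Mtop: "M \<noteq> top" using Mle by (auto simp: top_unique)
  have mtop: "mean_enn \<pi> \<noteq> top" using mle by (auto simp: top_unique)
  obtain \<mu>0 where mu0: "M = ennreal \<mu>0" "0 \<le> \<mu>0" using Mtop by (cases M) auto
  obtain m where mm: "mean_enn \<pi> = ennreal m" "0 \<le> m" using mtop by (cases "mean_enn \<pi>") auto
  have "ennreal 1 = ennreal (m + \<mu>0)" using sum1 mm mu0 by (simp add: ennreal_plus)
  then have sumr: "m + \<mu>0 = 1" using mm mu0 by (subst (asm) ennreal_inj) auto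
  have mu0pos: "0 < \<mu>0" using Mpos mu0 by simp
  have mlt: "mean_enn \<pi> < 1" using mm sumr mu0pos by simp
  have meanr: "mean \<pi> = m" using mm by (simp add: mean_def)
  have qform: "q t = \<mu>0 * W \<pi> t" for t
    using qW[of t] mu0 by (simp add: ennreal_mult'[symmetric] W_nonneg qnn ennreal_inj)
  have "spmf_of_pmf P = TGWT \<pi>"
  proof (rule spmf_eqI)
    fix y :: rtree
    obtain t a where y: "y = (t, a)" by (cases y)
    have "spmf (spmf_of_pmf P) y = (if valid_addr t a then \<mu>0 * W \<pi> t else 0)"
      by (simp add: y Pq qform valid_rtree_def)
    also have "\<dots> = spmf (TGWT \<pi>) y"
    proof -
      have "\<mu>0 = 1 - m" using sumr by simp
      then show ?thesis by (simp only: y TGWT_formula[OF mlt] meanr)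
    qed
    finally show "spmf (spmf_of_pmf P) y = spmf (TGWT \<pi>) y" .
  qed
  with mlt show ?thesis by blast
qed

theorem proposition4p19:
  fixes P :: "rtree pmf"
  assumes "\<forall>x\<in>set_pmf P. valid_rtree x"
  shows "(\<exists>\<pi> :: nat pmf. mean_enn \<pi> < 1 \<and> spmf_of_pmf P = TGWT \<pi>)
     \<longleftrightarrow> (unimodular P \<and>
          indep_rv P root_degree nondesc_tree)"
  using forward backward[OF assms] by blast

end
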